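(* Let $q$ be a prime power and $\mathcal{L}$ a non-empty set of lines of $\mathrm{PG}(n,q)$ satisfying (Pt), (Pl), (Sd) and (To) (see context). Let $U$ be a $4$-dimensional subspace of $\mathrm{PG}(n,q)$ which contains a pentagon of $\mathcal{L}$. Then: (a) If $P$ is a $(q+1)$-$U$-point and $V$ is a vertex of a pentagon contained in $U$ such that $P\neq V$ and $PV\in\mathcal{L}$, then there exists a pentagon contained in $U$ having both $P$ and $V$ as vertices. (b) Every $(q+1)$-$U$-point is a vertex of a pentagon contained in $U$. (c) Suppose $P,Q,R$ are $(q+1)$-$U$-points with $P\neq Q$, $P\ne R$, and $Q,R\in\pi_P$, and suppose that $R=Q$ or $R\notin PQ$. Then there exists a pentagon contained in $U$ having $P$, $Q$, $R$ as vertices.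
   Context: (Pt): every point of $\mathrm{PG}(n,q)$ lies on $0$ or $q+1$ lines of $\mathcal{L}$. (Pl): every plane contains $0$, $1$ or $q+1$ lines of $\mathcal{L}$. (Sd): every solid ($3$-dimensional subspace) contains $0$, $1$, $q+1$ or $2q+1$ lines of $\mathcal{L}$. (To): $|\mathcal{L}|\le q^5+q^4+q^3+q^2+q+1$. A pentagon of $\mathcal{L}$ is a set of five pairwise distinct points $P_1,\dots,P_5$ such that the lines $P_1P_2,P_2P_3,P_3P_4,P_4P_5,P_5P_1$ belong to $\mathcal{L}$ and are pairwise distinct; it is contained in $U$ if these five lines lie in $U$. A point $P$ is a $(q+1)$-$U$-point if exactly $q+1$ lines of $\mathcal{L}$ pass through $P$ and are contained in $U$. For a point $P$ lying on lines of $\mathcal{L}$, $\pi_P$ denotes the subspace spanned by the $q+1$ lines of $\mathcal{L}$ through $P$ (under these hypotheses this is a plane). *)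

theory Defs
  imports "HOL-Analysis.Analysis"
begin

text \<open>PG(n,q) is modelled as the lattice of linear subspaces of the vector space
  'a^'n over a finite field 'a with CARD('a) = q and CARD('n) = n+1.
  A projective subspace of projective dimension k is a linear subspace of
  vector dimension k+1.\<close>

definition proj_subspace :: "nat \<Rightarrow> ('a::field ^ 'n) set \<Rightarrow> bool" where
  "proj_subspace k S \<longleftrightarrow> vec.subspace S \<and> vec.dim S = k + 1"

abbreviation is_point :: "('a::field ^ 'n) set \<Rightarrow> bool" where
  "is_point S \<equiv> proj_subspace 0 S"
abbreviation is_line :: "('a::field ^ 'n) set \<Rightarrow> bool" where
  "is_line S \<equiv> proj_subspace 1 S"
abbreviation is_plane :: "('a::field ^ 'n) set \<Rightarrow> bool" where
  "is_plane S \<equiv> proj_subspace 2 S"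
abbreviation is_solid :: "('a::field ^ 'n) set \<Rightarrow> bool" where
  "is_solid S \<equiv> proj_subspace 3 S"

definition join :: "('a::field ^ 'n) set \<Rightarrow> ('a ^ 'n) set \<Rightarrow> ('a ^ 'n) set" where
  "join P Q = vec.span (P \<union> Q)"

text \<open>Hypotheses (Pt), (Pl), (Sd), (To) on a set L of lines of PG(n,q).\<close>
definition good_line_set :: "nat \<Rightarrow> ('a::field ^ 'n) set set \<Rightarrow> bool" where
  "good_line_set q L \<longleftrightarrow>
     (\<forall>l\<in>L. is_line l) \<and>
     (\<forall>P. is_point P \<longrightarrow> card {l\<in>L. P \<subseteq> l} \<in> {0, q+1}) \<and>
     (\<forall>E. is_plane E \<longrightarrow> card {l\<in>L. l \<subseteq> E} \<in> {0, 1, q+1}) \<and>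
     (\<forall>S. is_solid S \<longrightarrow> card {l\<in>L. l \<subseteq> S} \<in> {0, 1, q+1, 2*q+1}) \<and>
     card L \<le> q^5 + q^4 + q^3 + q^2 + q + 1"

definition pentagon :: "('a::field ^ 'n) set set \<Rightarrow> (nat \<Rightarrow> ('a ^ 'n) set) \<Rightarrow> bool" where
  "pentagon L P \<longleftrightarrow>
     (\<forall>i<5. is_point (P i)) \<and> inj_on P {..<5} \<and>
     (\<forall>i<5. join (P i) (P (Suc i mod 5)) \<in> L) \<and>
     inj_on (\<lambda>i. join (P i) (P (Suc i mod 5))) {..<5}"

definition pentagon_in :: "('a::field ^ 'n) set set \<Rightarrow> ('a ^ 'n) set \<Rightarrow> (nat \<Rightarrow> ('a ^ 'n) set) \<Rightarrow> bool" where
  "pentagon_in L U P \<longleftrightarrow> pentagon L P \<and> (\<forall>i<5. join (P i) (P (Suc i mod 5)) \<subseteq> U)"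

definition is_vertex :: "('a::field ^ 'n) set \<Rightarrow> (nat \<Rightarrow> ('a ^ 'n) set) \<Rightarrow> bool" where
  "is_vertex X P \<longleftrightarrow> X \<in> P ` {..<5}"

definition qU_point :: "nat \<Rightarrow> ('a::field ^ 'n) set set \<Rightarrow> ('a ^ 'n) set \<Rightarrow> ('a ^ 'n) set \<Rightarrow> bool" where
  "qU_point q L U P \<longleftrightarrow> is_point P \<and> card {l\<in>L. P \<subseteq> l \<and> l \<subseteq> U} = q + 1"

definition pi_of :: "('a::field ^ 'n) set set \<Rightarrow> ('a ^ 'n) set \<Rightarrow> ('a ^ 'n) set" where
  "pi_of L P = vec.span (\<Union>{l\<in>L. P \<subseteq> l})"

end

theory Submission
  imports Defs
begin

lemma span_id: "vec.subspace S \<Longrightarrow> vec.span S = S"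
  by (metis vec.span_eq_iff)

lemma sub_eq:
  fixes S T :: "('a::field ^ 'n) set"
  assumes "vec.subspace S" "vec.subspace T" "S \<subseteq> T" "vec.dim T \<le> vec.dim S"
  shows "S = T"
  using vec.dim_eq_span[OF assms(3,4)] assms(1,2) by (simp add: span_id)

lemma join_dim:
  fixes A B :: "('a::field ^ 'n) set"
  assumes "vec.subspace A" "vec.subspace B"
  shows "vec.dim (join A B) + vec.dim (A \<inter> B) = vec.dim A + vec.dim B"
proof -
  have "join A B = {x + y |x y. x \<in> A \<and> y \<in> B}"
    unfolding join_def vec.span_Un using assms by (simp add: span_id)
  then show ?thesis using vec.dim_sums_Int[OF assms] by simp
qed

lemma join_sub: "vec.subspace T \<Longrightarrow> A \<subseteq> T \<Longrightarrow> B \<subseteq> T \<Longrightarrow> join A B \<subseteq> T"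
  unfolding join_def by (simp add: vec.span_minimal)

lemma join_sup1: "A \<subseteq> join A B" unfolding join_def by (meson le_sup_iff vec.span_superset)
lemma join_sup2: "B \<subseteq> join A B" unfolding join_def by (meson le_sup_iff vec.span_superset)
lemma join_comm: "join A B = join B A" unfolding join_def by (simp add: Un_commute)
lemma join_subspace: "vec.subspace (join A B)" unfolding join_def by simp

lemma psub_dim:
  fixes S T :: "('a::field ^ 'n) set"
  assumes "vec.subspace S" "vec.subspace T" "S \<subseteq> T" "S \<noteq> T"
  shows "vec.dim S < vec.dim T"
  using sub_eq[OF assms(1-3)] assms(4) by fastforce

lemma ps_dim: "proj_subspace k S \<Longrightarrow> vec.dim S = k+1" by (simp add: proj_subspace_def)
lemma ps_sub: "proj_subspace k S \<Longrightarrow> vec.subspace S" by (simp add: proj_subspace_def)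

lemma point_eq:
  assumes "is_point X" "is_point Y" "X \<subseteq> Y" shows "X = Y"
  using sub_eq[of X Y] assms by (simp add: proj_subspace_def)

lemma join_points_line:
  assumes "is_point X" "is_point Y" "X \<noteq> Y" shows "is_line (join X Y)"
proof -
  have "X \<inter> Y \<noteq> X" using point_eq[OF assms(1,2)] assms(3) by blast
  then have "vec.dim (X \<inter> Y) < vec.dim X"
    using psub_dim[of "X \<inter> Y" X] assms by (simp add: proj_subspace_def vec.subspace_inter)
  then have z: "vec.dim (X \<inter> Y) = 0" using assms by (simp add: proj_subspace_def)
  have "vec.dim (join X Y) + vec.dim (X \<inter> Y) = vec.dim X + vec.dim Y" using join_dim[of X Y] assms
    by (simp add: proj_subspace_def)
  then have "vec.dim (join X Y) = 2" using z assms(1,2) unfolding proj_subspace_def by linarith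
  then show ?thesis using join_subspace by (simp add: proj_subspace_def)
qed

lemma line_eq:
  assumes "is_line l" "is_point X" "is_point Y" "X \<noteq> Y" "X \<subseteq> l" "Y \<subseteq> l"
  shows "join X Y = l"
  using sub_eq[of "join X Y" l] join_points_line[OF assms(2-4)] join_sub[of l X Y] assms
  by (simp add: proj_subspace_def)

lemma two_planes_common_lines:
  assumes "is_plane E" "is_plane F" "E \<noteq> F" "is_line l" "is_line m"
    "l \<subseteq> E" "l \<subseteq> F" "m \<subseteq> E" "m \<subseteq> F"
  shows "l = m"
proof -
  have s: "vec.subspace (E \<inter> F)" using assms by (simp add: proj_subspace_def vec.subspace_inter)
  have "E \<inter> F \<noteq> E"
  proof
    assume "E \<inter> F = E" then have "E \<subseteq> F" by blast
    then show False using sub_eq[of E F] assms by (auto simp: proj_subspace_def)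
  qed
  then have "vec.dim (E \<inter> F) < 3" using psub_dim[of "E \<inter> F" E] assms s by (simp add: proj_subspace_def)
  then have "l = E \<inter> F" "m = E \<inter> F"
    using sub_eq[of l "E \<inter> F"] sub_eq[of m "E \<inter> F"] assms s by (auto simp: proj_subspace_def)
  then show ?thesis by simp
qed

lemma planes_meet:
  assumes "vec.subspace A" "vec.subspace B" "vec.subspace U" "A \<subseteq> U" "B \<subseteq> U"
    "vec.dim A + vec.dim B > vec.dim U"
  shows "\<exists>X. is_point X \<and> X \<subseteq> A \<and> X \<subseteq> B"
proof -
  have "vec.dim (join A B) \<le> vec.dim U" using join_sub[OF assms(3-5)] vec.dim_subset by blast
  then have "vec.dim (A \<inter> B) > 0" using join_dim[OF assms(1,2)] assms(6) by linarith
  then obtain v where v: "v \<in> A \<inter> B" "v \<noteq> 0" using vec.dim_eq_0 by (metis not_gr0 subsetI singletonI singletonD)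
  have "vec.independent {v}" using v by (simp add: vec.independent_insert vec.span_empty)
  then have "vec.dim (vec.span {v}) = 1" by (simp add: vec.dim_span_eq_card_independent)
  moreover have "vec.span {v} \<subseteq> A" "vec.span {v} \<subseteq> B" using v assms
    by (simp_all add: vec.span_minimal)
  ultimately show ?thesis by (intro exI[of _ "vec.span {v}"]) (simp add: proj_subspace_def)
qed

lemma point_span:
  fixes X :: "('a::field ^ 'n) set"
  assumes "is_point X" shows "\<exists>x. x \<noteq> 0 \<and> X = vec.span {x}"
proof -
  obtain B where B: "B \<subseteq> X" "vec.independent B" "X \<subseteq> vec.span B" "card B = vec.dim X"
    using vec.basis_exists by blast
  then have "card B = 1" using assms by (simp add: proj_subspace_def)
  then obtain x where x: "B = {x}" using card_1_singletonE by blast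
  have "x \<noteq> 0" using B(2) x by simp
  moreover have "vec.span B \<subseteq> X" using B(1) assms by (simp add: proj_subspace_def vec.span_minimal)
  ultimately show ?thesis using B(3) x by blast
qed

lemma span_point:
  fixes x :: "'a::field ^ 'n"
  assumes "x \<noteq> 0" shows "is_point (vec.span {x})"
  using assms by (simp add: proj_subspace_def vec.dim_span_eq_card_independent)

lemma line_span2:
  fixes u v :: "'a::field ^ 'n"
  assumes "is_line l" "u \<in> l" "v \<in> l" "u \<noteq> 0" "v \<notin> vec.span {u}"
  shows "l = vec.span {u, v}"
proof -
  have "u \<notin> vec.span {v}"
  proof
    assume "u \<in> vec.span {v}"
    then obtain k where k: "u = k *s v" using vec.span_singleton by blast
    then have "k \<noteq> 0" using assms(4) by auto
    then have "v = (1/k) *s u" using k by (simp add: vec.scale_scale)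
    then show False using assms(5) by (simp add: vec.span_base vec.span_scale)
  qed
  moreover have "v \<noteq> 0" using assms(5) vec.span_zero by auto
  ultimately have ind: "vec.independent {u, v}"
    using assms by (simp add: vec.independent_insert)
  have uv: "u \<noteq> v" using assms(5) vec.span_base by fastforce
  have "vec.dim (vec.span {u, v}) = 2"
    using vec.dim_span_eq_card_independent[OF ind] uv by simp
  moreover have "vec.span {u, v} \<subseteq> l" using assms by (simp add: proj_subspace_def vec.span_minimal)
  ultimately show ?thesis using sub_eq[of "vec.span {u,v}" l] assms(1)
    by (simp add: proj_subspace_def)
qed

lemma exists_outside:
  fixes S :: "('a::field ^ 'n) set"
  assumes "vec.subspace S" "vec.dim S > card F" "finite F"
  shows "\<exists>w\<in>S. w \<notin> vec.span F"
proof (rule ccontr)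
  assume "\<not> ?thesis"
  then have "S \<subseteq> vec.span F" by blast
  then have "vec.dim S \<le> card F" using vec.dim_le_card assms(3) by blast
  then show False using assms by simp
qed

lemma lines_point_plane_card:
  fixes X P :: "('a::{field,finite} ^ 'n) set"
  assumes "is_plane P" "is_point X" "X \<subseteq> P"
  shows "card {l. is_line l \<and> X \<subseteq> l \<and> l \<subseteq> P} \<le> CARD('a) + 1"
proof -
  obtain x where x: "x \<noteq> 0" "X = vec.span {x}" using point_span[OF assms(2)] by blast
  have xP: "x \<in> P" using x assms(3) vec.span_base by blast
  have sP: "vec.subspace P" using assms(1) by (simp add: proj_subspace_def)
  obtain a where a: "a \<in> P" "a \<notin> vec.span {x}"
    using exists_outside[of P "{x}"] sP assms(1) by (auto simp: proj_subspace_def)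
  have c2: "card {x, a} \<le> 2" by (cases "x = a") auto
  obtain b where b: "b \<in> P" "b \<notin> vec.span {x, a}"
    using exists_outside[of P "{x, a}"] sP assms(1) c2
    by (fastforce simp: proj_subspace_def)
  have bx: "b \<notin> vec.span {x}" using b(2) vec.span_mono[of "{x}" "{x,a}"] by blast
  define f where "f = (\<lambda>t. case t of None \<Rightarrow> vec.span {x, b} | Some s \<Rightarrow> vec.span {x, a + s *s b})"
  have sub: "{l. is_line l \<and> X \<subseteq> l \<and> l \<subseteq> P} \<subseteq> range f"
  proof
    fix l assume "l \<in> {l. is_line l \<and> X \<subseteq> l \<and> l \<subseteq> P}"
    then have l: "is_line l" "X \<subseteq> l" "l \<subseteq> P" by auto
    have sl: "vec.subspace l" using l(1) by (simp add: proj_subspace_def)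
    have xl: "x \<in> l" using l(2) x vec.span_base by blast
    obtain w where w: "w \<in> l" "w \<notin> vec.span {x}"
      using exists_outside[of l "{x}"] sl l(1) by (auto simp: proj_subspace_def)
    have "w \<in> vec.span {x, a, b}"
    proof -
      have "P \<subseteq> vec.span {x, a, b}"
      proof -
        have ind: "vec.independent {x, a, b}"
        proof -
          have "vec.independent {b}" using bx vec.span_zero by (auto simp: vec.independent_insert)
          moreover have "a \<notin> vec.span {b}"
          proof
            assume "a \<in> vec.span {b}"
            then obtain k where k: "a = k *s b" using vec.span_singleton by blast
            have "k \<noteq> 0" by (metis a(2) k vec.scale_zero_left vec.span_zero)
            then have "b = (1/k) *s a" using k by (simp add: vec.scale_scale)
            then have "b \<in> vec.span {x, a}" by (simp add: vec.span_base vec.span_scale)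
            then show False using b(2) by blast
          qed
          moreover have "x \<notin> vec.span {a, b}"
          proof
            assume "x \<in> vec.span {a, b}"
            then obtain k where k: "x - k *s a \<in> vec.span {b}" using vec.span_breakdown_eq by blast
            then obtain m where m: "x - k *s a = m *s b" using vec.span_singleton by blast
            show False
            proof (cases "m = 0")
              case True
              then have "x = k *s a" using m by simp
              then have "k \<noteq> 0" using x(1) by auto
              then have "a = (1/k) *s x" using \<open>x = k *s a\<close> by (simp add: vec.scale_scale)
              then show False using a(2) by (simp add: vec.span_base vec.span_scale)
            next
              case False
              then have "b = (1/m) *s (x - k *s a)" using m by (simp add: vec.scale_scale)
              then have "b \<in> vec.span {x, a}"
                by (simp add: vec.span_base vec.span_scale vec.span_diff)
              then show False using b(2) by blast
            qed
          qed
          moreover have "a \<noteq> b" using b(2) vec.span_base by blast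
          ultimately show ?thesis
            by (simp add: vec.independent_insert)
        qed
        have "x \<noteq> a" "x \<noteq> b" "a \<noteq> b" using a(2) bx b(2) vec.span_base by blast+
        then have d: "vec.dim (vec.span {x, a, b}) = 3"
          using vec.dim_span_eq_card_independent[OF ind] by simp
        have "vec.span {x, a, b} \<subseteq> P" using xP a(1) b(1) sP by (simp add: vec.span_minimal)
        then show ?thesis using sub_eq[of "vec.span {x, a, b}" P] d sP assms(1)
          by (simp add: proj_subspace_def)
      qed
      then show ?thesis using w l(3) by blast
    qed
    then obtain k1 where k1: "w - k1 *s x \<in> vec.span {a, b}" using vec.span_breakdown_eq by blast
    then obtain k2 where k2: "w - k1 *s x - k2 *s a \<in> vec.span {b}" using vec.span_breakdown_eq by blast
    then obtain k3 where k3: "w - k1 *s x - k2 *s a = k3 *s b" using vec.span_singleton by blast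
    have vl: "(w - k1 *s x) \<in> l" using w(1) xl sl by (simp add: vec.subspace_diff vec.subspace_scale)
    show "l \<in> range f"
    proof (cases "k2 = 0")
      case True
      then have e: "w - k1 *s x = k3 *s b" using k3 by simp
      have "k3 \<noteq> 0"
      proof
        assume "k3 = 0" then have "w = k1 *s x" using e by simp
        then show False using w(2) by (simp add: vec.span_base vec.span_scale)
      qed
      then have "b = (1/k3) *s (w - k1 *s x)" using e by (simp add: vec.scale_scale)
      then have "b \<in> l" using vec.subspace_scale[OF sl vl, of "1/k3"] by (simp only:)
      then have "l = vec.span {x, b}" using line_span2[OF l(1) xl _ x(1) bx] by simp
      then have "l = f None" unfolding f_def by simp
      then show ?thesis by (rule image_eqI) simp
    next
      case False
      have "k2 *s (a + (k3/k2) *s b) = k2 *s a + k3 *s b"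
        using False by (simp add: vec.scale_right_distrib vec.scale_scale)
      also have "\<dots> = w - k1 *s x" unfolding k3[symmetric] by simp
      finally have e: "w - k1 *s x = k2 *s (a + (k3/k2) *s b)" by simp
      have "(1/k2) *s (w - k1 *s x) = ((1/k2) * k2) *s (a + (k3/k2) *s b)"
        unfolding e vec.scale_scale by simp
      then have "a + (k3/k2) *s b = (1/k2) *s (w - k1 *s x)" using False by simp
      then have inl: "a + (k3/k2) *s b \<in> l" using vec.subspace_scale[OF sl vl, of "1/k2"] by (simp only:)
      have nsp: "a + (k3/k2) *s b \<notin> vec.span {x}"
      proof
        assume "a + (k3/k2) *s b \<in> vec.span {x}"
        then obtain c where c: "a + (k3/k2) *s b = c *s x" using vec.span_singleton by blast
        show False
        proof (cases "k3 = 0")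
          case True
          then have "a = c *s x" using c by simp
          then show False using a(2) by (simp add: vec.span_base vec.span_scale)
        next
          case F3: False
          then have "k3/k2 \<noteq> 0" using False by simp
          have "(k3/k2) *s b = c *s x - a" using c by (simp add: eq_diff_eq add.commute)
          note q1 = this
          have h: "(k2/k3) * (k3/k2) = 1" using F3 False by simp
          have "(k2/k3) *s (c *s x - a) = (k2/k3) *s ((k3/k2) *s b)" by (simp only: q1)
          also have "\<dots> = ((k2/k3) * (k3/k2)) *s b" by (simp only: vec.scale_scale)
          also have "\<dots> = b" by (simp only: h vec.scale_one)
          finally have "b = (k2/k3) *s (c *s x - a)" by (rule sym)
          then have "b \<in> vec.span {x, a}" by (simp add: vec.span_base vec.span_scale vec.span_diff)
          then show False using b(2) by blast
        qed
      qed
      then have "l = vec.span {x, a + (k3/k2) *s b}" by (rule line_span2[OF l(1) xl inl x(1)])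
      then have "l = f (Some (k3/k2))" unfolding f_def by simp
      then show ?thesis by (rule image_eqI) simp
    qed
  qed
  have "card {l. is_line l \<and> X \<subseteq> l \<and> l \<subseteq> P} \<le> card (range f)"
    by (rule card_mono[OF _ sub]) simp
  also have "\<dots> \<le> CARD('a option)" by (rule card_image_le) simp
  also have "CARD('a option) = CARD('a) + 1"
  proof -
    have "(UNIV :: 'a option set) = insert None (Some ` UNIV)" by (auto intro: option.exhaust)
    then show ?thesis by (simp add: card_image)
  qed
  finally show ?thesis by simp
qed

definition lat :: "('a::field ^ 'n) set set \<Rightarrow> ('a ^ 'n) set \<Rightarrow> ('a ^ 'n) set set" where
  "lat L X = {l\<in>L. X \<subseteq> l}"

definition adj :: "('a::field ^ 'n) set set \<Rightarrow> ('a ^ 'n) set \<Rightarrow> ('a ^ 'n) set \<Rightarrow> bool" where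
  "adj L X Y \<longleftrightarrow> is_point X \<and> is_point Y \<and> X \<noteq> Y \<and> join X Y \<in> L"

lemma adj_sym: "adj L X Y = adj L Y X"
  unfolding adj_def by (auto simp: join_comm)

lemma join_dim_calc:
  fixes A B :: "('a::field ^ 'n) set"
  assumes "vec.subspace A" "vec.subspace B" "vec.dim (A \<inter> B) = c"
  shows "vec.dim (join A B) = vec.dim A + vec.dim B - c"
  using join_dim[OF assms(1,2)] assms(3) by linarith

lemma lines_meet_plane:
  fixes l1 l2 X :: "('a::field ^ 'n) set"
  assumes "is_line l1" "is_line l2" "l1 \<noteq> l2" "is_point X" "X \<subseteq> l1" "X \<subseteq> l2"
  shows "is_plane (join l1 l2)"
proof -
  have s: "vec.subspace (l1 \<inter> l2)" using assms by (simp add: ps_sub vec.subspace_inter)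
  have "vec.dim X \<le> vec.dim (l1 \<inter> l2)" using assms by (simp add: vec.dim_subset)
  moreover have "l1 \<inter> l2 \<noteq> l1"
  proof
    assume "l1 \<inter> l2 = l1" then have "l1 \<subseteq> l2" by blast
    then show False using sub_eq[of l1 l2] assms by (simp add: proj_subspace_def)
  qed
  then have "vec.dim (l1 \<inter> l2) < vec.dim l1" using psub_dim[of "l1 \<inter> l2" l1] s assms(1) by (simp add: ps_sub)
  ultimately have "vec.dim (l1 \<inter> l2) = 1" using assms by (simp add: ps_dim)
  then have "vec.dim (join l1 l2) = 3" using join_dim_calc[of l1 l2 1] assms by (simp add: ps_dim ps_sub)
  then show ?thesis by (simp add: proj_subspace_def join_subspace)
qed

lemma plane_line_solid:
  fixes E l X :: "('a::field ^ 'n) set"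
  assumes "is_plane E" "is_line l" "\<not> l \<subseteq> E" "is_point X" "X \<subseteq> E" "X \<subseteq> l"
  shows "is_solid (join E l)"
proof -
  have s: "vec.subspace (E \<inter> l)" using assms by (simp add: ps_sub vec.subspace_inter)
  have "vec.dim X \<le> vec.dim (E \<inter> l)" using assms by (simp add: vec.dim_subset)
  moreover have "E \<inter> l \<noteq> l" using assms(3) by blast
  then have "vec.dim (E \<inter> l) < vec.dim l" using psub_dim[of "E \<inter> l" l] s assms(2) by (simp add: ps_sub)
  ultimately have "vec.dim (E \<inter> l) = 1" using assms by (simp add: ps_dim)
  then have "vec.dim (join E l) = 4" using join_dim_calc[of E l 1] assms by (simp add: ps_dim ps_sub)
  then show ?thesis by (simp add: proj_subspace_def join_subspace)
qed

locale geo =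
  fixes L :: "('a::{field,finite} ^ 'n) set set" and q :: nat
  assumes q_def: "q = CARD('a)" and good: "good_line_set q L"
begin

lemma Lline: "l \<in> L \<Longrightarrow> is_line l" using good by (simp add: good_line_set_def)
lemma Pt: "is_point X \<Longrightarrow> card (lat L X) = 0 \<or> card (lat L X) = q + 1"
proof -
  assume "is_point X"
  then have "card (lat L X) \<in> {0, q+1}" using good unfolding good_line_set_def lat_def by blast
  then show ?thesis by (simp only: insert_iff empty_iff simp_thms)
qed
lemma Pl: "is_plane E \<Longrightarrow> card {l\<in>L. l \<subseteq> E} \<in> {0, 1, q+1}"
  using good unfolding good_line_set_def by blast
lemma Sd: "is_solid S \<Longrightarrow> card {l\<in>L. l \<subseteq> S} \<le> 2*q+1"
proof -
  assume "is_solid S"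
  then have "card {l\<in>L. l \<subseteq> S} \<in> {0, 1, q+1, 2*q+1}" using good unfolding good_line_set_def by blast
  then show ?thesis by (auto simp del: card_0_eq)
qed

lemma q2: "q \<ge> 2"
proof -
  have "card {0::'a, 1} \<le> CARD('a)" by (rule card_mono) auto
  then show ?thesis using q_def by simp
qed

lemma plane_q1:
  assumes "is_plane E" "l1 \<in> L" "l2 \<in> L" "l1 \<noteq> l2" "l1 \<subseteq> E" "l2 \<subseteq> E"
  shows "card {l\<in>L. l \<subseteq> E} = q + 1"
proof -
  have "card {l1, l2} \<le> card {l\<in>L. l \<subseteq> E}" by (rule card_mono) (use assms in auto)
  then have c2: "2 \<le> card {l\<in>L. l \<subseteq> E}" using assms(4) by simp
  show ?thesis using Pl[OF assms(1)] c2 by (auto simp del: card_0_eq)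
qed

lemma lat_q1: "is_point X \<Longrightarrow> lat L X \<noteq> {} \<Longrightarrow> card (lat L X) = q + 1"
  using Pt by fastforce

lemma lat_coplanar:
  assumes X: "is_point X" and l: "l1 \<in> lat L X" "l2 \<in> lat L X" "l3 \<in> lat L X" "l1 \<noteq> l2"
  shows "l3 \<subseteq> join l1 l2"
proof (rule ccontr)
  assume n: "\<not> l3 \<subseteq> join l1 l2"
  have L: "l1 \<in> L" "l2 \<in> L" "l3 \<in> L" "X \<subseteq> l1" "X \<subseteq> l2" "X \<subseteq> l3" using l by (auto simp: lat_def)
  have ln: "is_line l1" "is_line l2" "is_line l3" using L Lline by auto
  have n13: "l1 \<noteq> l3" "l2 \<noteq> l3" using n join_sup1 join_sup2 by blast+
  define E12 where "E12 = join l1 l2"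
  define E13 where "E13 = join l1 l3"
  define E23 where "E23 = join l2 l3"
  have P: "is_plane E12" "is_plane E13" "is_plane E23"
    unfolding E12_def E13_def E23_def
    using lines_meet_plane ln l(4) n13 X L by blast+
  have XE: "X \<subseteq> E12" using L join_sup1 E12_def by blast
  define S where "S = join E12 l3"
  have S: "is_solid S" unfolding S_def using plane_line_solid[OF P(1) ln(3) _ X XE L(6)] n E12_def by simp
  have sS: "vec.subspace S" using S by (simp add: ps_sub)
  have in12: "l1 \<subseteq> E12" "l2 \<subseteq> E12" "l1 \<subseteq> E13" "l3 \<subseteq> E13" "l2 \<subseteq> E23" "l3 \<subseteq> E23"
    unfolding E12_def E13_def E23_def by (simp_all add: join_sup1 join_sup2)
  have "E12 \<subseteq> S" "l3 \<subseteq> S" unfolding S_def by (simp_all add: join_sup1 join_sup2)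
  then have sub1: "E12 \<subseteq> S" "l3 \<subseteq> S" by auto
  have sub: "E12 \<subseteq> S" "E13 \<subseteq> S" "E23 \<subseteq> S"
    using sub1 apply blast
    unfolding E13_def E23_def using in12 sub1 sS by (rule_tac join_sub; blast)+
  have ne: "E12 \<noteq> E13" "E12 \<noteq> E23" "E13 \<noteq> E23"
  proof -
    show "E12 \<noteq> E13" using in12 n E12_def by auto
    show "E12 \<noteq> E23" using in12 n E12_def by auto
    show "E13 \<noteq> E23"
    proof
      assume "E13 = E23"
      then have "l2 \<subseteq> E13" using in12 by simp
      then have "E12 \<subseteq> E13" unfolding E12_def using in12 P(2) by (simp add: join_sub ps_sub)
      then have "E12 = E13" using sub_eq[of E12 E13] P by (simp add: ps_dim ps_sub)
      then show False using n in12 E12_def by auto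
    qed
  qed
  define A where "A = (\<lambda>E. {l\<in>L. l \<subseteq> E})"
  have cA: "card (A E12) = q+1" "card (A E13) = q+1" "card (A E23) = q+1"
    unfolding A_def
    using plane_q1[OF P(1) L(1) L(2) l(4) in12(1) in12(2)]
      plane_q1[OF P(2) L(1) L(3) n13(1) in12(3) in12(4)]
      plane_q1[OF P(3) L(2) L(3) n13(2) in12(5) in12(6)] by simp_all
  have i1: "A E12 \<inter> A E13 \<subseteq> {l1}"
  proof
    fix l assume "l \<in> A E12 \<inter> A E13"
    then have "l \<in> L" "l \<subseteq> E12" "l \<subseteq> E13" unfolding A_def by auto
    then have "l = l1" using two_planes_common_lines[OF P(1) P(2) ne(1) Lline[OF \<open>l \<in> L\<close>] ln(1)] in12 by simp
    then show "l \<in> {l1}" by simp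
  qed
  have i2: "(A E12 \<union> A E13) \<inter> A E23 \<subseteq> {l2, l3}"
  proof
    fix l assume "l \<in> (A E12 \<union> A E13) \<inter> A E23"
    then have "l \<in> L" "l \<subseteq> E12 \<or> l \<subseteq> E13" "l \<subseteq> E23" unfolding A_def by auto
    then have "l = l2 \<or> l = l3"
      using two_planes_common_lines[OF P(1) P(3) ne(2) Lline[OF \<open>l \<in> L\<close>] ln(2)]
        two_planes_common_lines[OF P(2) P(3) ne(3) Lline[OF \<open>l \<in> L\<close>] ln(3)] in12 by blast
    then show "l \<in> {l2, l3}" by simp
  qed
  have f: "finite (A E)" for E by simp
  have "card (A E12 \<union> A E13) = card (A E12) + card (A E13) - card (A E12 \<inter> A E13)"
    using card_Un_Int[OF f f] by simp
  moreover have "card (A E12 \<inter> A E13) \<le> 1" using card_mono[OF _ i1] by simp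
  ultimately have c1: "card (A E12 \<union> A E13) \<ge> 2*q+1" using cA by simp
  have "card {l2, l3} \<le> 2" by (cases "l2 = l3") auto
  then have "card ((A E12 \<union> A E13) \<inter> A E23) \<le> 2" using card_mono[OF _ i2] by simp
  moreover have "card (A E12 \<union> A E13 \<union> A E23) = card (A E12 \<union> A E13) + card (A E23) - card ((A E12 \<union> A E13) \<inter> A E23)"
    using card_Un_Int[OF _ f] by simp
  ultimately have "card (A E12 \<union> A E13 \<union> A E23) \<ge> 3*q" using c1 cA q2 by linarith
  moreover have "A E12 \<union> A E13 \<union> A E23 \<subseteq> {l\<in>L. l \<subseteq> S}" unfolding A_def using sub by blast
  then have "card (A E12 \<union> A E13 \<union> A E23) \<le> card {l\<in>L. l \<subseteq> S}" by (rule card_mono[rotated]) simp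
  ultimately show False using Sd[OF S] q2 by linarith
qed

lemma two_lines:
  assumes "is_point X" "lat L X \<noteq> {}"
  obtains l1 l2 where "l1 \<in> lat L X" "l2 \<in> lat L X" "l1 \<noteq> l2"
proof -
  have "card (lat L X) \<ge> 2" using lat_q1[OF assms] q2 by simp
  then have "\<not> (\<forall>x\<in>lat L X. \<forall>y\<in>lat L X. x = y)" using card_le_Suc0_iff_eq[of "lat L X"] by auto
  then show ?thesis using that by blast
qed

lemma pi_facts:
  assumes X: "is_point X" "lat L X \<noteq> {}"
  shows "is_plane (pi_of L X)" "\<And>l. l \<in> lat L X \<Longrightarrow> l \<subseteq> pi_of L X" "X \<subseteq> pi_of L X"
proof -
  obtain l1 l2 where l: "l1 \<in> lat L X" "l2 \<in> lat L X" "l1 \<noteq> l2" using two_lines[OF X] by blast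
  have P: "is_plane (join l1 l2)" using lines_meet_plane[OF _ _ l(3) X(1)] l Lline by (auto simp: lat_def)
  have "pi_of L X = join l1 l2"
  proof
    have "\<Union>{l\<in>L. X \<subseteq> l} \<subseteq> join l1 l2"
    proof
      fix v assume "v \<in> \<Union>{l\<in>L. X \<subseteq> l}"
      then obtain l where l3: "l \<in> L" "X \<subseteq> l" "v \<in> l" by blast
      then have "l \<subseteq> join l1 l2" using lat_coplanar[OF X(1) l(1,2) _ l(3)] by (simp add: lat_def)
      then show "v \<in> join l1 l2" using l3 by blast
    qed
    then show "pi_of L X \<subseteq> join l1 l2" unfolding pi_of_def
      by (rule vec.span_minimal) (rule join_subspace)
    have "l1 \<union> l2 \<subseteq> \<Union>{l\<in>L. X \<subseteq> l}" using l unfolding lat_def by blast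
    then show "join l1 l2 \<subseteq> pi_of L X" unfolding pi_of_def join_def
      by (rule vec.span_mono)
  qed
  then show "is_plane (pi_of L X)" using P by simp
  show lp: "\<And>l. l \<in> lat L X \<Longrightarrow> l \<subseteq> pi_of L X"
  proof -
    fix l assume "l \<in> lat L X"
    then have "l \<subseteq> \<Union>{l\<in>L. X \<subseteq> l}" unfolding lat_def by blast
    then show "l \<subseteq> pi_of L X" unfolding pi_of_def using vec.span_superset by blast
  qed
  have "X \<subseteq> l1" using l(1) by (simp add: lat_def)
  then show "X \<subseteq> pi_of L X" using lp[OF l(1)] by blast
qed

lemma pi_lines:
  assumes X: "is_point X" "lat L X \<noteq> {}"
  shows "{l\<in>L. l \<subseteq> pi_of L X} = lat L X"
proof -
  have sub: "lat L X \<subseteq> {l\<in>L. l \<subseteq> pi_of L X}" using pi_facts[OF X] by (auto simp: lat_def)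
  obtain l1 l2 where l: "l1 \<in> lat L X" "l2 \<in> lat L X" "l1 \<noteq> l2" using two_lines[OF X] by blast
  have "card {l\<in>L. l \<subseteq> pi_of L X} = q+1"
    using plane_q1[OF pi_facts(1)[OF X]] l pi_facts(2)[OF X] by (auto simp: lat_def)
  then show ?thesis using card_subset_eq[OF _ sub] lat_q1[OF X] by simp
qed

lemma pi_adj:
  assumes X: "is_point X" "lat L X \<noteq> {}" and Y: "is_point Y" "Y \<subseteq> pi_of L X" "Y \<noteq> X"
  shows "adj L X Y"
proof -
  define T where "T = {l. is_line l \<and> X \<subseteq> l \<and> l \<subseteq> pi_of L X}"
  have P: "is_plane (pi_of L X)" "X \<subseteq> pi_of L X" using pi_facts[OF X] by auto
  have cT: "card T \<le> q + 1" unfolding T_def q_def using lines_point_plane_card[OF P(1) X(1) P(2)] by simp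
  have sub: "lat L X \<subseteq> T" unfolding T_def using pi_facts(2)[OF X] Lline by (auto simp: lat_def)
  have "lat L X = T" using card_subset_eq[OF _ sub] cT lat_q1[OF X] card_mono[OF _ sub] by simp
  moreover have "join X Y \<in> T" unfolding T_def
    using join_points_line[OF X(1) Y(1)] Y(3) join_sup1 join_sub[of "pi_of L X" X Y] P Y(2)
    by (auto simp: ps_sub)
  ultimately have "join X Y \<in> L" by (auto simp: lat_def)
  then show ?thesis using X Y by (auto simp: adj_def)
qed

lemma adj_lat: "adj L X Y \<Longrightarrow> lat L X \<noteq> {}"
  unfolding adj_def lat_def using join_sup1 by blast

lemma adj_in_pi: "adj L X Y \<Longrightarrow> Y \<subseteq> pi_of L X"
proof -
  assume a: "adj L X Y"
  then have "join X Y \<in> lat L X" unfolding adj_def lat_def using join_sup1 by blast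
  then show ?thesis using pi_facts(2)[OF _ adj_lat[OF a]] a join_sup2 unfolding adj_def by blast
qed

lemma coll_adj:
  assumes "adj L Y Z" "is_point X" "X \<subseteq> join Y Z" "X \<noteq> Y"
  shows "adj L X Y"
proof -
  have "is_line (join Y Z)" using assms(1) Lline by (simp add: adj_def)
  then have "join X Y = join Y Z" using line_eq[of "join Y Z" X Y] assms join_sup1 by (auto simp: adj_def)
  then show ?thesis using assms by (auto simp: adj_def)
qed

lemma tri:
  assumes "adj L X Y" "adj L Y Z" "adj L X Z" "Y \<noteq> Z"
  shows "X \<subseteq> join Y Z"
proof -
  have X: "is_point X" "lat L X \<noteq> {}" using assms adj_lat by (auto simp: adj_def)
  have "join Y Z \<subseteq> pi_of L X"
    using join_sub[of "pi_of L X" Y Z] adj_in_pi[OF assms(1)] adj_in_pi[OF assms(3)] pi_facts(1)[OF X]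
    by (simp add: ps_sub)
  then have "join Y Z \<in> lat L X" using pi_lines[OF X] assms(2) by (auto simp: adj_def)
  then show ?thesis by (simp add: lat_def)
qed

lemma quad:
  assumes a: "adj L X1 X2" "adj L X2 X3" "adj L X3 X4" "adj L X4 X1"
    and d: "X1 \<noteq> X3" "X2 \<noteq> X4" and n: "\<not> adj L X1 X3" "\<not> adj L X2 X4"
  shows False
proof -
  have X1: "is_point X1" "lat L X1 \<noteq> {}" using a adj_lat by (auto simp: adj_def)
  have X3: "is_point X3" "lat L X3 \<noteq> {}" using a adj_lat by (auto simp: adj_def)
  define P1 where "P1 = pi_of L X1"
  define P3 where "P3 = pi_of L X3"
  have P: "is_plane P1" "is_plane P3" unfolding P1_def P3_def using pi_facts X1 X3 by auto
  have a': "adj L X1 X4" "adj L X3 X2" using a adj_sym by metis+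
  have in1: "X2 \<subseteq> P1" "X4 \<subseteq> P1" unfolding P1_def using adj_in_pi a(1) a'(1) by auto
  have in3: "X2 \<subseteq> P3" "X4 \<subseteq> P3" unfolding P3_def using adj_in_pi a(3) a'(2) by auto
  have ne: "P1 \<noteq> P3"
  proof
    assume "P1 = P3"
    then have "X3 \<subseteq> P1" using pi_facts(3)[OF X3] P3_def by simp
    then have "adj L X1 X3" using pi_adj[OF X1 X3(1)] d(1) P1_def by auto
    then show False using n by simp
  qed
  have s: "vec.subspace (P1 \<inter> P3)" using P by (simp add: ps_sub vec.subspace_inter)
  have ln: "is_line (join X2 X4)" using join_points_line d(2) a by (auto simp: adj_def)
  have "join X2 X4 \<subseteq> P1 \<inter> P3" using join_sub[OF s] in1 in3 by auto
  then have "vec.dim (join X2 X4) \<le> vec.dim (P1 \<inter> P3)" by (rule vec.dim_subset)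
  then have g: "vec.dim (P1 \<inter> P3) \<ge> 2" using ln by (simp add: ps_dim)
  have "P1 \<inter> P3 \<noteq> P1"
  proof
    assume "P1 \<inter> P3 = P1" then have "P1 \<subseteq> P3" by blast
    then show False using sub_eq[of P1 P3] P ne by (simp add: ps_dim ps_sub)
  qed
  then have "vec.dim (P1 \<inter> P3) < 3" using psub_dim[of "P1 \<inter> P3" P1] s P by (simp add: ps_dim ps_sub)
  then have "vec.dim (P1 \<inter> P3) = 2" using g by simp
  then have "vec.dim (join P1 P3) = 4" using join_dim_calc[of P1 P3 2] P by (simp add: ps_dim ps_sub)
  then have S: "is_solid (join P1 P3)" by (simp add: proj_subspace_def join_subspace)
  have j: "P1 \<subseteq> join P1 P3" "P3 \<subseteq> join P1 P3" by (simp_all add: join_sup1 join_sup2)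
  have sub: "lat L X1 \<union> lat L X3 \<subseteq> {l\<in>L. l \<subseteq> join P1 P3}"
  proof
    fix l assume "l \<in> lat L X1 \<union> lat L X3"
    then show "l \<in> {l\<in>L. l \<subseteq> join P1 P3}"
    proof
      assume h: "l \<in> lat L X1"
      then have "l \<subseteq> P1" using pi_facts(2)[OF X1] P1_def by simp
      then show ?thesis using h j unfolding lat_def by blast
    next
      assume h: "l \<in> lat L X3"
      then have "l \<subseteq> P3" using pi_facts(2)[OF X3] P3_def by simp
      then show ?thesis using h j unfolding lat_def by blast
    qed
  qed
  have disj: "lat L X1 \<inter> lat L X3 = {}"
  proof (rule ccontr)
    assume "lat L X1 \<inter> lat L X3 \<noteq> {}"
    then obtain l where l: "l \<in> L" "X1 \<subseteq> l" "X3 \<subseteq> l" unfolding lat_def by blast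
    then have "join X1 X3 = l" using line_eq[of l X1 X3] Lline[OF l(1)] X1(1) X3(1) d(1) by simp
    then have "adj L X1 X3" using l X1 X3 d by (auto simp: adj_def)
    then show False using n by simp
  qed
  have "card (lat L X1 \<union> lat L X3) = 2*q+2" using card_Un_disjoint[OF _ _ disj] lat_q1 X1 X3 by simp
  then have "2*q+2 \<le> card {l\<in>L. l \<subseteq> join P1 P3}" using card_mono[OF _ sub] by simp
  then show False using Sd[OF S] by simp
qed

lemma qU_all:
  assumes "qU_point q L U X"
  shows "lat L X \<noteq> {}" "\<And>l. l \<in> lat L X \<Longrightarrow> l \<subseteq> U"
proof -
  have X: "is_point X" using assms by (simp add: qU_point_def)
  have sub: "{l\<in>L. X \<subseteq> l \<and> l \<subseteq> U} \<subseteq> lat L X" by (auto simp: lat_def)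
  have c: "card {l\<in>L. X \<subseteq> l \<and> l \<subseteq> U} = q+1" using assms by (simp add: qU_point_def)
  then have "card (lat L X) \<ge> q+1" using card_mono[OF _ sub] by simp
  then have c2: "card (lat L X) = q+1" using Pt[OF X] by auto
  then show "lat L X \<noteq> {}" by auto
  have "{l\<in>L. X \<subseteq> l \<and> l \<subseteq> U} = lat L X" using card_subset_eq[OF _ sub] c c2 by simp
  then show "\<And>l. l \<in> lat L X \<Longrightarrow> l \<subseteq> U" by blast
qed

lemma qU_pi:
  assumes "qU_point q L U X" "vec.subspace U"
  shows "pi_of L X \<subseteq> U"
  unfolding pi_of_def using qU_all[OF assms(1)] assms(2) by (intro vec.span_minimal) (auto simp: lat_def)

lemma qU_intro:
  assumes X: "is_point X" and l: "l1 \<in> lat L X" "l2 \<in> lat L X" "l1 \<noteq> l2" "l1 \<subseteq> U" "l2 \<subseteq> U"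
    and U: "vec.subspace U"
  shows "qU_point q L U X"
proof -
  have ne: "lat L X \<noteq> {}" using l by auto
  have "\<forall>l\<in>lat L X. l \<subseteq> join l1 l2" using lat_coplanar[OF X l(1,2) _ l(3)] by blast
  moreover have "join l1 l2 \<subseteq> U" using join_sub[OF U l(4,5)] .
  ultimately have "{l\<in>L. X \<subseteq> l \<and> l \<subseteq> U} = lat L X" by (auto simp: lat_def)
  then show ?thesis using lat_q1[OF X ne] X by (simp add: qU_point_def)
qed

end

definition pent :: "('a::field ^ 'n) set set \<Rightarrow> ('a ^ 'n) set \<Rightarrow> ('a ^ 'n) set \<Rightarrow> ('a ^ 'n) set \<Rightarrow> ('a ^ 'n) set \<Rightarrow> ('a ^ 'n) set \<Rightarrow> ('a ^ 'n) set \<Rightarrow> bool" where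
  "pent L U A B C D E \<longleftrightarrow> distinct [A,B,C,D,E] \<and>
     adj L A B \<and> adj L B C \<and> adj L C D \<and> adj L D E \<and> adj L E A \<and>
     \<not> adj L A C \<and> \<not> adj L A D \<and> \<not> adj L B D \<and> \<not> adj L B E \<and> \<not> adj L C E \<and>
     join A B \<subseteq> U \<and> join B C \<subseteq> U \<and> join C D \<subseteq> U \<and> join D E \<subseteq> U \<and> join E A \<subseteq> U"

lemma adjS: "adj L X Y \<Longrightarrow> adj L Y X" using adj_sym by blast
lemma nadjS: "\<not> adj L X Y \<Longrightarrow> \<not> adj L Y X" using adj_sym by blast

lemma pentD:
  assumes "pent L U A B C D E"
  shows "A \<noteq> B" "A \<noteq> C" "A \<noteq> D" "A \<noteq> E" "B \<noteq> C" "B \<noteq> D" "B \<noteq> E" "C \<noteq> D" "C \<noteq> E" "D \<noteq> E"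
    "adj L A B" "adj L B C" "adj L C D" "adj L D E" "adj L E A"
    "\<not> adj L A C" "\<not> adj L A D" "\<not> adj L B D" "\<not> adj L B E" "\<not> adj L C E"
    "join A B \<subseteq> U" "join B C \<subseteq> U" "join C D \<subseteq> U" "join D E \<subseteq> U" "join E A \<subseteq> U"
  using assms unfolding pent_def by simp_all

lemma pentI:
  assumes "A \<noteq> B" "A \<noteq> C" "A \<noteq> D" "A \<noteq> E" "B \<noteq> C" "B \<noteq> D" "B \<noteq> E" "C \<noteq> D" "C \<noteq> E" "D \<noteq> E"
    "adj L A B" "adj L B C" "adj L C D" "adj L D E" "adj L E A"
    "\<not> adj L A C" "\<not> adj L A D" "\<not> adj L B D" "\<not> adj L B E" "\<not> adj L C E"
    "join A B \<subseteq> U" "join B C \<subseteq> U" "join C D \<subseteq> U" "join D E \<subseteq> U" "join E A \<subseteq> U"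
  shows "pent L U A B C D E"
  using assms unfolding pent_def by simp

lemma pent_rot: assumes p: "pent L U A B C D E" shows "pent L U B C D E A"
proof -
  note d = pentD[OF p]
  show ?thesis by (rule pentI) (use d nadjS[OF d(16)] nadjS[OF d(17)] in auto)
qed

lemma pent_refl: assumes p: "pent L U A B C D E" shows "pent L U A E D C B"
proof -
  note d = pentD[OF p]
  have j: "join A E = join E A" "join E D = join D E" "join D C = join C D" "join C B = join B C" "join B A = join A B"
    by (simp_all add: join_comm)
  show ?thesis
    by (rule pentI) (use d j adjS[OF d(11)] adjS[OF d(12)] adjS[OF d(13)] adjS[OF d(14)] adjS[OF d(15)]
      nadjS[OF d(16)] nadjS[OF d(17)] nadjS[OF d(18)] nadjS[OF d(19)] nadjS[OF d(20)] in auto)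
qed

lemma pent_points: "pent L U A B C D E \<Longrightarrow> is_point A \<and> is_point B \<and> is_point C \<and> is_point D \<and> is_point E"
proof -
  assume p: "pent L U A B C D E"
  note d = pentD[OF p]
  show ?thesis using d(11) d(13) d(15) unfolding adj_def by blast
qed

context geo begin

lemma on_line_adj:
  assumes "adj L Y Z" "is_point X" "X \<subseteq> join Y Z" "X \<noteq> Y" "X \<noteq> Z"
  shows "adj L X Y" "adj L X Z"
proof -
  show "adj L X Y" using coll_adj[OF assms(1-4)] .
  have a: "adj L Z Y" using adjS[OF assms(1)] .
  have "X \<subseteq> join Z Y" using assms(3) join_comm[of Y Z] by simp
  then show "adj L X Z" using coll_adj[OF a assms(2) _ assms(5)] by simp
qed

lemma edge_excl:
  assumes p: "pent L U A B C D E"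
  shows "\<not> C \<subseteq> join A B" "\<not> D \<subseteq> join A B" "\<not> E \<subseteq> join A B"
proof -
  note d = pentD[OF p]
  note pts = pent_points[OF p]
  show "\<not> C \<subseteq> join A B" using on_line_adj(1)[OF d(11), of C] pts d nadjS[OF d(16)] by blast
  show "\<not> D \<subseteq> join A B" using on_line_adj(1)[OF d(11), of D] pts d nadjS[OF d(17)] by blast
  show "\<not> E \<subseteq> join A B" using on_line_adj(2)[OF d(11), of E] pts d nadjS[OF d(19)] by blast
qed

lemma pent_qU:
  assumes p: "pent L U A B C D E" and U: "vec.subspace U"
  shows "qU_point q L U A"
proof -
  note d = pentD[OF p]
  have A: "is_point A" using pent_points[OF p] by simp
  have j: "join A E = join E A" by (rule join_comm)
  have l1: "join A B \<in> lat L A" using d(11) join_sup1[of A B] unfolding adj_def lat_def by blast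
  have l2: "join A E \<in> lat L A" using d(15) join_sup1[of A E] j unfolding adj_def lat_def by simp
  have "join A B \<noteq> join A E" using edge_excl(3)[OF p] join_sup2[of E A] j by auto
  moreover have "join A B \<subseteq> U" "join A E \<subseteq> U" using d j by auto
  ultimately show ?thesis using qU_intro[OF A l1 l2] U by blast
qed

lemma pent_qU_all:
  assumes p: "pent L U A B C D E" and U: "vec.subspace U"
  shows "qU_point q L U A" "qU_point q L U B" "qU_point q L U C" "qU_point q L U D" "qU_point q L U E"
proof -
  note r1 = pent_rot[OF p]
  note r2 = pent_rot[OF r1]
  note r3 = pent_rot[OF r2]
  note r4 = pent_rot[OF r3]
  show "qU_point q L U A" by (rule pent_qU[OF p U])
  show "qU_point q L U B" by (rule pent_qU[OF r1 U])
  show "qU_point q L U C" by (rule pent_qU[OF r2 U])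
  show "qU_point q L U D" by (rule pent_qU[OF r3 U])
  show "qU_point q L U E" by (rule pent_qU[OF r4 U])
qed

lemma qU_adj_U:
  assumes "qU_point q L U X" "adj L X Y" shows "join X Y \<subseteq> U"
proof -
  have "join X Y \<in> lat L X" using assms(2) join_sup1[of X Y] unfolding adj_def lat_def by blast
  then show ?thesis using qU_all(2)[OF assms(1)] by blast
qed

end

context geo begin

lemma constr:
  assumes p: "pent L U A B C D E" and P: "qU_point q L U P" "adj L P A"
    and notv: "P \<noteq> A" "P \<noteq> B" "P \<noteq> C" "P \<noteq> D" "P \<noteq> E" and nAE: "\<not> P \<subseteq> join A E"
    and U: "proj_subspace 4 U"
  shows "\<exists>X. pent L U A P X D E"
proof -
  note d = pentD[OF p]
  note pts = pent_points[OF p]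
  have sU: "vec.subspace U" using U by (simp add: ps_sub)
  have qD: "qU_point q L U D" and qA: "qU_point q L U A" using pent_qU_all[OF p sU] by auto
  have Pp: "is_point P" "lat L P \<noteq> {}" using P(1) qU_all(1)[OF P(1)] by (auto simp: qU_point_def)
  have Dp: "is_point D" "lat L D \<noteq> {}" using qD qU_all(1)[OF qD] by (auto simp: qU_point_def)
  have pl: "is_plane (pi_of L P)" "is_plane (pi_of L D)" using pi_facts(1) Pp Dp by auto
  have "vec.dim (pi_of L P) + vec.dim (pi_of L D) > vec.dim U" using pl U by (simp add: ps_dim)
  then obtain X where X: "is_point X" "X \<subseteq> pi_of L P" "X \<subseteq> pi_of L D"
    using planes_meet[of "pi_of L P" "pi_of L D" U] pl sU qU_pi[OF P(1) sU] qU_pi[OF qD sU]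
    by (auto simp: ps_sub)
  have aAP: "adj L A P" using adjS[OF P(2)] .
  have aAE: "adj L A E" using adjS[OF d(15)] .
  have aED: "adj L E D" using adjS[OF d(14)] .
  have nPE: "\<not> adj L P E"
  proof
    assume "adj L P E"
    then have "P \<subseteq> join A E" using tri[OF P(2) aAE] d(4) by simp
    then show False using nAE by simp
  qed
  have nPD: "\<not> adj L P D"
  proof
    assume a: "adj L P D"
    show False using quad[OF aAP a d(14) d(15) d(3) notv(5) d(17) nPE] .
  qed
  have XP: "X \<noteq> P"
  proof
    assume "X = P"
    then have "adj L D P" using pi_adj[OF Dp Pp(1)] X(3) notv(4) by auto
    then show False using nPD adjS by blast
  qed
  have XD: "X \<noteq> D"
  proof
    assume "X = D"
    then have "adj L P D" using pi_adj[OF Pp Dp(1)] X(2) notv(4) by auto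
    then show False using nPD by simp
  qed
  have aPX: "adj L P X" using pi_adj[OF Pp X(1) X(2)] XP by simp
  have aDX: "adj L D X" using pi_adj[OF Dp X(1) X(3)] XD by simp
  have aXD: "adj L X D" using adjS[OF aDX] .
  have XA: "X \<noteq> A"
  proof
    assume "X = A" then show False using aDX nadjS[OF d(17)] by simp
  qed
  have XE: "X \<noteq> E"
  proof
    assume "X = E" then show False using aPX nPE by simp
  qed
  have c1: "\<not> (adj L X A \<and> adj L X E)"
  proof
    assume h: "adj L X A \<and> adj L X E"
    then have x1: "X \<subseteq> join A E" using tri[of X A E] aAE d(4) by simp
    have x2: "X \<subseteq> join D E" using tri[OF aXD d(14)] h d(10) by simp
    have lAE: "is_line (join A E)" using aAE Lline unfolding adj_def by simp
    have lDE: "is_line (join D E)" using d(14) Lline unfolding adj_def by simp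
    have e1: "join X E = join A E" using line_eq[OF lAE X(1) _ XE x1] pts join_sup2[of E A] by simp
    have e2: "join X E = join D E" using line_eq[OF lDE X(1) _ XE x2] pts join_sup2[of E D] by simp
    have "D \<subseteq> join A E" using e1 e2 join_sup1[of D E] by simp
    then have "adj L D A" using on_line_adj(1)[OF aAE, of D] pts d(3) d(10) by auto
    then show False using nadjS[OF d(17)] by simp
  qed
  have c2: "\<not> (adj L X A \<and> \<not> adj L X E)"
  proof
    assume h: "adj L X A \<and> \<not> adj L X E"
    show False using quad[OF _ aAE aED aDX] h XE d(3) d(17) by blast
  qed
  have c3: "\<not> (adj L X E \<and> \<not> adj L X A)"
  proof
    assume h: "adj L X E \<and> \<not> adj L X A"
    show False using quad[OF aPX _ d(15) aAP] h notv(5) XA nPE by blast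
  qed
  have nXA: "\<not> adj L A X" using c1 c2 nadjS by blast
  have nXE: "\<not> adj L X E" using c1 c3 by blast
  have U1: "join A P \<subseteq> U" using qU_adj_U[OF qA aAP] .
  have U2: "join P X \<subseteq> U" using qU_adj_U[OF P(1) aPX] .
  have U3: "join X D \<subseteq> U" using qU_adj_U[OF qD aDX] join_comm[of X D] by simp
  have "pent L U A P X D E"
    by (rule pentI) (use d notv XP XD XA XE aAP aPX aXD nXA nXE nPD nPE U1 U2 U3 in auto)
  then show ?thesis by blast
qed

end

abbreviation inP where "inP X A B C D E \<equiv> X = A \<or> X = B \<or> X = C \<or> X = D \<or> X = E"

context geo begin

lemma core_a:
  assumes p: "pent L U A B C D E" and P: "qU_point q L U P" "adj L P A" and U: "proj_subspace 4 U"
  shows "\<exists>A' B' C' D' E'. pent L U A' B' C' D' E' \<and> inP P A' B' C' D' E' \<and> inP A A' B' C' D' E'"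
proof (cases "inP P A B C D E")
  case True then show ?thesis using p by blast
next
  case False
  then have nv: "P \<noteq> A" "P \<noteq> B" "P \<noteq> C" "P \<noteq> D" "P \<noteq> E" by auto
  show ?thesis
  proof (cases "P \<subseteq> join A E")
    case False
    then obtain X where "pent L U A P X D E" using constr[OF p P nv False U] by blast
    then show ?thesis by blast
  next
    case True
    note d = pentD[OF p]
    note pts = pent_points[OF p]
    have nAB: "\<not> P \<subseteq> join A B"
    proof
      assume h: "P \<subseteq> join A B"
      have lAB: "is_line (join A B)" using d(11) Lline unfolding adj_def by simp
      have lAE: "is_line (join A E)" using d(15) join_comm[of E A] Lline unfolding adj_def by simp
      have Pp: "is_point P" using P(1) by (simp add: qU_point_def)
      have e1: "join P A = join A B" using line_eq[OF lAB Pp _ nv(1) h] pts join_sup1[of A B] by simp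
      have e2: "join P A = join A E" using line_eq[OF lAE Pp _ nv(1) True] pts join_sup1[of A E] by simp
      have "E \<subseteq> join A B" using e1 e2 join_sup2[of E A] by simp
      then show False using edge_excl(3)[OF p] by simp
    qed
    obtain X where "pent L U A P X C B" using constr[OF pent_refl[OF p] P nv(1,5,4,3,2) nAB U] by blast
    then show ?thesis by blast
  qed
qed

lemma core_gen:
  assumes p: "pent L U A B C D E" and V: "inP V A B C D E" and P: "qU_point q L U P" "adj L P V"
    and U: "proj_subspace 4 U"
  shows "\<exists>A' B' C' D' E'. pent L U A' B' C' D' E' \<and> inP P A' B' C' D' E' \<and> inP V A' B' C' D' E'"
proof -
  note r1 = pent_rot[OF p]
  note r2 = pent_rot[OF r1]
  note r3 = pent_rot[OF r2]
  note r4 = pent_rot[OF r3]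
  from V show ?thesis
  proof (elim disjE)
    assume "V = A" then show ?thesis using core_a[OF p P(1) _ U] P(2) by simp
  next
    assume "V = B" then show ?thesis using core_a[OF r1 P(1) _ U] P(2) by simp
  next
    assume "V = C" then show ?thesis using core_a[OF r2 P(1) _ U] P(2) by simp
  next
    assume "V = D" then show ?thesis using core_a[OF r3 P(1) _ U] P(2) by simp
  next
    assume "V = E" then show ?thesis using core_a[OF r4 P(1) _ U] P(2) by simp
  qed
qed

lemma core_b:
  assumes p: "pent L U A B C D E" and P: "qU_point q L U P" and U: "proj_subspace 4 U"
  shows "\<exists>A' B' C' D' E'. pent L U A' B' C' D' E' \<and> inP P A' B' C' D' E'"
proof (cases "adj L P A")
  case True then show ?thesis using core_gen[OF p _ P True U] by blast
next
  case nPA: False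
  have sU: "vec.subspace U" using U by (simp add: ps_sub)
  have qA: "qU_point q L U A" using pent_qU_all[OF p sU] by simp
  have Pp: "is_point P" "lat L P \<noteq> {}" using P qU_all(1)[OF P] by (auto simp: qU_point_def)
  have Ap: "is_point A" "lat L A \<noteq> {}" using qA qU_all(1)[OF qA] by (auto simp: qU_point_def)
  show ?thesis
  proof (cases "P = A")
    case True then show ?thesis using p by blast
  next
    case PA: False
    have pl: "is_plane (pi_of L P)" "is_plane (pi_of L A)" using pi_facts(1) Pp Ap by auto
    have "vec.dim (pi_of L P) + vec.dim (pi_of L A) > vec.dim U" using pl U by (simp add: ps_dim)
    then obtain X where X: "is_point X" "X \<subseteq> pi_of L P" "X \<subseteq> pi_of L A"
      using planes_meet[of "pi_of L P" "pi_of L A" U] pl sU qU_pi[OF P sU] qU_pi[OF qA sU]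
      by (auto simp: ps_sub)
    have XP: "X \<noteq> P"
    proof
      assume "X = P"
      then have "adj L A P" using pi_adj[OF Ap Pp(1)] X(3) PA by auto
      then show False using nPA adjS by blast
    qed
    have XA: "X \<noteq> A"
    proof
      assume "X = A"
      then have "adj L P A" using pi_adj[OF Pp Ap(1)] X(2) PA by auto
      then show False using nPA by simp
    qed
    have aPX: "adj L P X" using pi_adj[OF Pp X(1) X(2)] XP by simp
    have aAX: "adj L A X" using pi_adj[OF Ap X(1) X(3)] XA by simp
    have l1: "join X P \<in> lat L X" using adjS[OF aPX] join_sup1[of X P] unfolding adj_def lat_def by blast
    have l2: "join X A \<in> lat L X" using adjS[OF aAX] join_sup1[of X A] unfolding adj_def lat_def by blast
    have ne: "join X P \<noteq> join X A"
    proof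
      assume h: "join X P = join X A"
      have "A \<subseteq> join X P" using h join_sup2[of A X] by simp
      have "adj L A P" using on_line_adj(2)[OF adjS[OF aPX] Ap(1) \<open>A \<subseteq> join X P\<close> not_sym[OF XA] not_sym[OF PA]] .
      then show False using nPA adjS by blast
    qed
    have u1: "join X P \<subseteq> U" using qU_adj_U[OF P aPX] join_comm[of P X] by simp
    have u2: "join X A \<subseteq> U" using qU_adj_U[OF qA aAX] join_comm[of A X] by simp
    have qX: "qU_point q L U X" using qU_intro[OF X(1) l1 l2 ne u1 u2 sU] .
    obtain A' B' C' D' E' where p2: "pent L U A' B' C' D' E'" "inP X A' B' C' D' E'"
      using core_gen[OF p _ qX adjS[OF aAX] U] by blast
    show ?thesis using core_gen[OF p2(1) p2(2) P aPX U] by blast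
  qed
qed

lemma rot_to:
  assumes p: "pent L U A B C D E" and V: "inP V A B C D E"
  shows "\<exists>B' C' D' E'. pent L U V B' C' D' E' \<and> (\<forall>X. inP X V B' C' D' E' \<longleftrightarrow> inP X A B C D E)"
proof -
  note r1 = pent_rot[OF p]
  note r2 = pent_rot[OF r1]
  note r3 = pent_rot[OF r2]
  note r4 = pent_rot[OF r3]
  from V show ?thesis
  proof (elim disjE)
    assume "V = A" then show ?thesis using p by blast
  next
    assume "V = B" then show ?thesis using r1 by blast
  next
    assume "V = C" then show ?thesis using r2 by blast
  next
    assume "V = D" then show ?thesis using r3 by blast
  next
    assume "V = E" then show ?thesis using r4 by blast
  qed
qed

lemma core_c:
  assumes p: "pent L U A B C D E" and P: "qU_point q L U P" and Q: "qU_point q L U Q" and R: "qU_point q L U R"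
    and d: "P \<noteq> Q" "P \<noteq> R" and QR: "Q \<subseteq> pi_of L P" "R \<subseteq> pi_of L P"
    and c: "R = Q \<or> \<not> R \<subseteq> join P Q" and U: "proj_subspace 4 U"
  shows "\<exists>A' B' C' D' E'. pent L U A' B' C' D' E' \<and> inP P A' B' C' D' E' \<and> inP Q A' B' C' D' E'
     \<and> inP R A' B' C' D' E'"
proof -
  have Pp: "is_point P" "lat L P \<noteq> {}" using P qU_all(1)[OF P] by (auto simp: qU_point_def)
  have Qp: "is_point Q" and Rp: "is_point R" using Q R by (auto simp: qU_point_def)
  have aPQ: "adj L P Q" using pi_adj[OF Pp Qp QR(1)] d by simp
  have aPR: "adj L P R" using pi_adj[OF Pp Rp QR(2)] d by simp
  obtain A1 B1 C1 D1 E1 where p1: "pent L U A1 B1 C1 D1 E1" "inP P A1 B1 C1 D1 E1"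
    using core_b[OF p P U] by (elim exE conjE) (rule that; assumption)
  obtain A2 B2 C2 D2 E2 where p2: "pent L U A2 B2 C2 D2 E2" "inP Q A2 B2 C2 D2 E2" "inP P A2 B2 C2 D2 E2"
    using core_gen[OF p1 Q adjS[OF aPQ] U] by (elim exE conjE) (rule that; assumption)
  obtain B3 C3 D3 E3 where p3: "pent L U P B3 C3 D3 E3" "inP Q P B3 C3 D3 E3"
  proof -
    obtain B3 C3 D3 E3 where h1: "pent L U P B3 C3 D3 E3" and h2: "\<forall>X. inP X P B3 C3 D3 E3 \<longleftrightarrow> inP X A2 B2 C2 D2 E2"
      using rot_to[OF p2(1) p2(3)] by (elim exE conjE) (rule that; assumption)
    have h3: "inP Q P B3 C3 D3 E3" by (rule iffD2[OF spec[OF h2, of Q] p2(2)])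
    show ?thesis by (rule that[OF h1 h3])
  qed
  note d3 = pentD[OF p3(1)]
  have "Q \<noteq> C3" using aPQ d3(16) by auto
  moreover have "Q \<noteq> D3" using aPQ d3(17) by auto
  ultimately have QBE: "Q = B3 \<or> Q = E3" using p3(2) d(1) by auto
  obtain C4 D4 E4 where p4: "pent L U P Q C4 D4 E4"
  proof (cases "Q = B3")
    case True then show ?thesis using that p3(1) by simp
  next
    case False then have "Q = E3" using QBE by simp
    then show ?thesis using that pent_refl[OF p3(1)] by simp
  qed
  show ?thesis
  proof (cases "R = Q \<or> inP R P Q C4 D4 E4")
    case True
    show ?thesis
      apply (rule exI[of _ P], rule exI[of _ Q], rule exI[of _ C4], rule exI[of _ D4], rule exI[of _ E4])
      using p4 True by auto
  next
    case False
    then have nv: "R \<noteq> P" "R \<noteq> E4" "R \<noteq> D4" "R \<noteq> C4" "R \<noteq> Q" by auto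
    have nPQ: "\<not> R \<subseteq> join P Q" using c False by blast
    obtain X where X: "pent L U P R X C4 Q"
      using constr[OF pent_refl[OF p4] R adjS[OF aPR] nv nPQ U] by blast
    show ?thesis
      apply (rule exI[of _ P], rule exI[of _ R], rule exI[of _ X], rule exI[of _ C4], rule exI[of _ Q])
      using X by auto
  qed
qed

end

definition mk :: "'b \<Rightarrow> 'b \<Rightarrow> 'b \<Rightarrow> 'b \<Rightarrow> 'b \<Rightarrow> nat \<Rightarrow> 'b" where
  "mk A B C D E = (\<lambda>i. if i = 0 then A else if i = 1 then B else if i = 2 then C else if i = 3 then D else E)"

lemma lt5: "(i::nat) < 5 \<longleftrightarrow> i = 0 \<or> i = 1 \<or> i = 2 \<or> i = 3 \<or> i = 4" by auto

lemma lessThan5: "{..<(5::nat)} = {0,1,2,3,4}" by (auto simp: lt5)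

lemma is_vertex_mk: "is_vertex X (mk A B C D E) \<longleftrightarrow> inP X A B C D E"
  unfolding is_vertex_def lessThan5 mk_def by auto

lemma is_vertex_D: "is_vertex X F \<Longrightarrow> inP X (F 0) (F 1) (F 2) (F 3) (F 4)"
  unfolding is_vertex_def lessThan5 by auto

context geo begin

lemma ntri:
  assumes "adj L X Y" "adj L Y Z" "adj L X Z" "X \<noteq> Z"
  shows "join X Y = join Y Z"
proof -
  have YZ: "Y \<noteq> Z" using assms(2) by (simp add: adj_def)
  have "X \<subseteq> join Y Z" using tri[OF assms(1-3) YZ] .
  moreover have "is_line (join Y Z)" using assms(2) Lline by (simp add: adj_def)
  ultimately show ?thesis using line_eq[of "join Y Z" X Y] assms(1) join_sup1[of Y Z] by (simp add: adj_def)
qed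

lemma pent_to:
  assumes p: "pent L U A B C D E"
  shows "pentagon_in L U (mk A B C D E)"
proof -
  note d = pentD[OF p]
  note pts = pent_points[OF p]
  note r1 = pent_rot[OF p]
  note r2 = pent_rot[OF r1]
  note r3 = pent_rot[OF r2]
  note r4 = pent_rot[OF r3]
  note x0 = edge_excl[OF p]
  note x1 = edge_excl[OF r1]
  note x2 = edge_excl[OF r2]
  note x3 = edge_excl[OF r3]
  note x4 = edge_excl[OF r4]
  have s: "A \<subseteq> join A B" "B \<subseteq> join A B" "B \<subseteq> join B C" "C \<subseteq> join B C" "C \<subseteq> join C D"
    "D \<subseteq> join C D" "D \<subseteq> join D E" "E \<subseteq> join D E" "E \<subseteq> join E A" "A \<subseteq> join E A"
    by (simp_all add: join_sup1 join_sup2)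
  have ne: "join A B \<noteq> join B C" "join A B \<noteq> join C D" "join A B \<noteq> join D E" "join A B \<noteq> join E A"
    "join B C \<noteq> join C D" "join B C \<noteq> join D E" "join B C \<noteq> join E A"
    "join C D \<noteq> join D E" "join C D \<noteq> join E A" "join D E \<noteq> join E A"
    using s(4) x0(1) apply auto[1]
    using s(5) x0(1) apply auto[1]
    using s(7) x0(2) apply auto[1]
    using s(9) x0(3) apply auto[1]
    using s(6) x1(1) apply auto[1]
    using s(7) x1(1) apply auto[1]
    using s(9) x1(2) apply auto[1]
    using s(8) x2(1) apply auto[1]
    using s(9) x2(1) apply auto[1]
    using s(10) x3(1) apply auto[1]
    done
  have L: "join A B \<in> L" "join B C \<in> L" "join C D \<in> L" "join D E \<in> L" "join E A \<in> L"
    using d(11-15) by (simp_all add: adj_def)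
  have m: "mk A B C D E 0 = A" "mk A B C D E 1 = B" "mk A B C D E 2 = C" "mk A B C D E 3 = D"
    "mk A B C D E 4 = E" by (simp_all add: mk_def)
  have sm: "Suc 0 mod 5 = 1" "Suc 1 mod 5 = (2::nat)" "Suc 2 mod 5 = (3::nat)" "Suc 3 mod 5 = (4::nat)"
    "Suc 4 mod 5 = (0::nat)" by simp_all
  have all5: "\<And>Q. (\<forall>i<(5::nat). Q i) \<longleftrightarrow> Q 0 \<and> Q 1 \<and> Q 2 \<and> Q 3 \<and> Q 4"
    by (auto simp: lt5)
  have p1: "\<forall>i<5. is_point (mk A B C D E i)" unfolding all5 m using pts by simp
  have p2: "inj_on (mk A B C D E) {..<5}" unfolding lessThan5 inj_on_def
    by (simp only: ball_simps m) (use d in auto)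
  have p3: "\<forall>i<5. join (mk A B C D E i) (mk A B C D E (Suc i mod 5)) \<in> L"
    unfolding all5 sm m using L by simp
  have p4: "inj_on (\<lambda>i. join (mk A B C D E i) (mk A B C D E (Suc i mod 5))) {..<5}"
    unfolding lessThan5 inj_on_def
    by (simp only: ball_simps m sm) (use ne in \<open>auto simp: eq_commute\<close>)
  have p5: "\<forall>i<5. join (mk A B C D E i) (mk A B C D E (Suc i mod 5)) \<subseteq> U"
    unfolding all5 sm m using d by simp
  show ?thesis unfolding pentagon_in_def pentagon_def using p1 p2 p3 p4 p5 by blast
qed

lemma pent_from:
  assumes F: "pentagon_in L U F"
  shows "pent L U (F 0) (F 1) (F 2) (F 3) (F 4)"
proof -
  have pt: "\<forall>i<5. is_point (F i)" and inj: "inj_on F {..<5}"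
    and ln: "\<forall>i<5. join (F i) (F (Suc i mod 5)) \<in> L"
    and inj2: "inj_on (\<lambda>i. join (F i) (F (Suc i mod 5))) {..<5}"
    and U: "\<forall>i<5. join (F i) (F (Suc i mod 5)) \<subseteq> U"
    using F unfolding pentagon_in_def pentagon_def by auto
  have pts: "is_point (F 0)" "is_point (F 1)" "is_point (F 2)" "is_point (F 3)" "is_point (F 4)"
    using pt[rule_format, of 0] pt[rule_format, of 1] pt[rule_format, of 2] pt[rule_format, of 3] pt[rule_format, of 4] by (simp_all add: numeral_2_eq_2)
  have dis: "F 0 \<noteq> F 1" "F 0 \<noteq> F 2" "F 0 \<noteq> F 3" "F 0 \<noteq> F 4" "F 1 \<noteq> F 2" "F 1 \<noteq> F 3"
    "F 1 \<noteq> F 4" "F 2 \<noteq> F 3" "F 2 \<noteq> F 4" "F 3 \<noteq> F 4"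
    using inj_on_contraD[OF inj, of 0 1] inj_on_contraD[OF inj, of 0 2] inj_on_contraD[OF inj, of 0 3] inj_on_contraD[OF inj, of 0 4] inj_on_contraD[OF inj, of 1 2] inj_on_contraD[OF inj, of 1 3] inj_on_contraD[OF inj, of 1 4] inj_on_contraD[OF inj, of 2 3] inj_on_contraD[OF inj, of 2 4] inj_on_contraD[OF inj, of 3 4] by simp_all
  have lns: "join (F 0) (F 1) \<in> L" "join (F 1) (F 2) \<in> L" "join (F 2) (F 3) \<in> L"
    "join (F 3) (F 4) \<in> L" "join (F 4) (F 0) \<in> L"
    using ln[rule_format, of 0] ln[rule_format, of 1] ln[rule_format, of 2] ln[rule_format, of 3] ln[rule_format, of 4] by (simp_all add: numeral_2_eq_2)
  have Us: "join (F 0) (F 1) \<subseteq> U" "join (F 1) (F 2) \<subseteq> U" "join (F 2) (F 3) \<subseteq> U"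
    "join (F 3) (F 4) \<subseteq> U" "join (F 4) (F 0) \<subseteq> U"
    using U[rule_format, of 0] U[rule_format, of 1] U[rule_format, of 2] U[rule_format, of 3] U[rule_format, of 4] by (simp_all add: numeral_2_eq_2)
  have ed: "join (F 0) (F 1) \<noteq> join (F 1) (F 2)" "join (F 1) (F 2) \<noteq> join (F 2) (F 3)"
    "join (F 2) (F 3) \<noteq> join (F 3) (F 4)" "join (F 3) (F 4) \<noteq> join (F 4) (F 0)"
    "join (F 4) (F 0) \<noteq> join (F 0) (F 1)"
    using inj_on_contraD[OF inj2, of 0 1] inj_on_contraD[OF inj2, of 1 2] inj_on_contraD[OF inj2, of 2 3]
      inj_on_contraD[OF inj2, of 3 4] inj_on_contraD[OF inj2, of 4 0] by (simp_all add: numeral_2_eq_2)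
  have a: "adj L (F 0) (F 1)" "adj L (F 1) (F 2)" "adj L (F 2) (F 3)" "adj L (F 3) (F 4)" "adj L (F 4) (F 0)"
    using pts dis lns unfolding adj_def by auto
  have n1: "\<not> adj L (F 0) (F 2)" using ntri[OF a(1) a(2) _ dis(2)] ed(1) by blast
  have n2: "\<not> adj L (F 1) (F 3)" using ntri[OF a(2) a(3) _ dis(6)] ed(2) by blast
  have n3: "\<not> adj L (F 2) (F 4)" using ntri[OF a(3) a(4) _ dis(9)] ed(3) by blast
  have n4: "\<not> adj L (F 0) (F 3)" using ntri[OF a(4) a(5) _ not_sym[OF dis(3)]] ed(4) adjS by blast
  have n5: "\<not> adj L (F 1) (F 4)" using ntri[OF a(5) a(1) _ not_sym[OF dis(7)]] ed(5) adjS by blast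
  show ?thesis by (rule pentI) (use dis a n1 n2 n3 n4 n5 Us in simp_all)
qed

end

theorem lemma7:
  fixes L :: "('a::{field,finite} ^ 'n) set set" and U :: "('a ^ 'n) set" and q :: nat
  assumes q_def: "q = CARD('a)"
    and nonempty: "L \<noteq> {}"
    and good: "good_line_set q L"
    and U4: "proj_subspace 4 U"
    and Upent: "\<exists>P5. pentagon_in L U P5"
  shows
    "(\<forall>P V P5. qU_point q L U P \<and> pentagon_in L U P5 \<and> is_vertex V P5 \<and> P \<noteq> V
         \<and> join P V \<in> L \<longrightarrow>
         (\<exists>P5'. pentagon_in L U P5' \<and> is_vertex P P5' \<and> is_vertex V P5'))
   \<and> (\<forall>P. qU_point q L U P \<longrightarrow> (\<exists>P5. pentagon_in L U P5 \<and> is_vertex P P5))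
   \<and> (\<forall>P Q R. qU_point q L U P \<and> qU_point q L U Q \<and> qU_point q L U R
         \<and> P \<noteq> Q \<and> P \<noteq> R \<and> Q \<subseteq> pi_of L P \<and> R \<subseteq> pi_of L P
         \<and> (R = Q \<or> \<not> R \<subseteq> join P Q) \<longrightarrow>
         (\<exists>P5. pentagon_in L U P5 \<and> is_vertex P P5 \<and> is_vertex Q P5 \<and> is_vertex R P5))"
proof -
  interpret geo L q using q_def good by unfold_locales
  obtain F0 where F0: "pentagon_in L U F0" using Upent by blast
  note p0 = pent_from[OF F0]
  have A: "\<forall>P V P5. qU_point q L U P \<and> pentagon_in L U P5 \<and> is_vertex V P5 \<and> P \<noteq> V
         \<and> join P V \<in> L \<longrightarrow>
         (\<exists>P5'. pentagon_in L U P5' \<and> is_vertex P P5' \<and> is_vertex V P5')"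
  proof (intro allI impI)
    fix P V F assume h: "qU_point q L U P \<and> pentagon_in L U F \<and> is_vertex V F \<and> P \<noteq> V \<and> join P V \<in> L"
    have pF: "pent L U (F 0) (F 1) (F 2) (F 3) (F 4)" by (rule pent_from) (use h in blast)
    have V: "inP V (F 0) (F 1) (F 2) (F 3) (F 4)" using is_vertex_D h by blast
    have Vp: "is_point V" using V pent_points[OF pF] by blast
    have aPV: "adj L P V" using h Vp unfolding adj_def qU_point_def by blast
    obtain A' B' C' D' E' where r: "pent L U A' B' C' D' E'" "inP P A' B' C' D' E'" "inP V A' B' C' D' E'"
    proof -
      have hq: "qU_point q L U P" using h by blast
      show ?thesis using core_gen[OF pF V hq aPV U4] by (elim exE conjE) (rule that; assumption)
    qed
    show "\<exists>P5'. pentagon_in L U P5' \<and> is_vertex P P5' \<and> is_vertex V P5'"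
      by (rule exI[of _ "mk A' B' C' D' E'"]) (simp only: is_vertex_mk r pent_to[OF r(1)] simp_thms)
  qed
  have B: "\<forall>P. qU_point q L U P \<longrightarrow> (\<exists>P5. pentagon_in L U P5 \<and> is_vertex P P5)"
  proof (intro allI impI)
    fix P assume h: "qU_point q L U P"
    obtain A' B' C' D' E' where r: "pent L U A' B' C' D' E'" "inP P A' B' C' D' E'"
      using core_b[OF p0 h U4] by (elim exE conjE) (rule that; assumption)
    show "\<exists>P5. pentagon_in L U P5 \<and> is_vertex P P5"
      by (rule exI[of _ "mk A' B' C' D' E'"]) (simp only: is_vertex_mk r pent_to[OF r(1)] simp_thms)
  qed
  have C: "\<forall>P Q R. qU_point q L U P \<and> qU_point q L U Q \<and> qU_point q L U R
         \<and> P \<noteq> Q \<and> P \<noteq> R \<and> Q \<subseteq> pi_of L P \<and> R \<subseteq> pi_of L P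
         \<and> (R = Q \<or> \<not> R \<subseteq> join P Q) \<longrightarrow>
         (\<exists>P5. pentagon_in L U P5 \<and> is_vertex P P5 \<and> is_vertex Q P5 \<and> is_vertex R P5)"
  proof (intro allI impI)
    fix P Q R assume h: "qU_point q L U P \<and> qU_point q L U Q \<and> qU_point q L U R
         \<and> P \<noteq> Q \<and> P \<noteq> R \<and> Q \<subseteq> pi_of L P \<and> R \<subseteq> pi_of L P
         \<and> (R = Q \<or> \<not> R \<subseteq> join P Q)"
    then have h1: "qU_point q L U P" "qU_point q L U Q" "qU_point q L U R" "P \<noteq> Q" "P \<noteq> R"
      "Q \<subseteq> pi_of L P" "R \<subseteq> pi_of L P" "R = Q \<or> \<not> R \<subseteq> join P Q" by auto
    obtain A' B' C' D' E' where r: "pent L U A' B' C' D' E'" "inP P A' B' C' D' E'"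
      "inP Q A' B' C' D' E'" "inP R A' B' C' D' E'"
      using core_c[OF p0 h1 U4] by (elim exE conjE) (rule that; assumption)
    show "\<exists>P5. pentagon_in L U P5 \<and> is_vertex P P5 \<and> is_vertex Q P5 \<and> is_vertex R P5"
      by (rule exI[of _ "mk A' B' C' D' E'"]) (simp only: is_vertex_mk r pent_to[OF r(1)] simp_thms)
  qed
  show ?thesis using A B C by blast
qed

end
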